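(* For every $n\geq 6$ there exist two distinct binary level-1 networks $N_1,N_2$ on the same leaf set of size $n$ which have the same number of galls and the same number of non-trivial cut arcs, but $|\mathcal R(N_1)|\neq|\mathcal R(N_2)|$.
   Context: A leaf of a DAG is a vertex of in-degree 1 and out-degree 0. For a finite set $X$, a phylogenetic network on $X$ is a DAG (no loops, no multiple arcs) with a unique vertex (the root) of in-degree 0, which has out-degree at least 2, whose set of leaves is $X$, and in which every other non-leaf vertex is either a split vertex (in-degree 1, out-degree $\geq 2$) or a hybrid vertex (in-degree $\geq 2$, out-degree $\geq 1$). It is binary if the root and all split vertices have out-degree 2 and every hybrid vertex has in-degree 2 and out-degree 1. $U(N)$ denotes the underlying undirected graph. A binary level-1 network is a binary phylogenetic network in which every biconnected component of $U(N)$ contains at most one hybrid vertex; by standing convention every cycle of $U(N)$ has at least four vertices. A gall is a biconnected component of $U(N)$ with more than one edge. An arc is a cut arc if deleting it disconnects $U(N)$; it is non-trivial if its head is not a leaf. For distinct $a,b,c\in X$, the triplet $ab|c$ is consistent with $N$ if there exist distinct vertices $v,w$ of $N$ and directed paths from $v$ to $c$, from $v$ to $w$, from $w$ to $a$ and from $w$ to $b$ such that no two of these four paths share an interior vertex. $\mathcal R(N)$ is the set of all triplets consistent with $N$ (with $ab|c=ba|c$). *)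

theory Defs
  imports Main
begin

text \<open>A network is given by a vertex set V and an arc set A (pairs (tail, head)).
  Multiple arcs are impossible by construction.\<close>

definition indeg :: "('v \<times> 'v) set \<Rightarrow> 'v \<Rightarrow> nat" where
  "indeg A v = card {u. (u, v) \<in> A}"

definition outdeg :: "('v \<times> 'v) set \<Rightarrow> 'v \<Rightarrow> nat" where
  "outdeg A v = card {w. (v, w) \<in> A}"

definition is_dag :: "'v set \<Rightarrow> ('v \<times> 'v) set \<Rightarrow> bool" where
  "is_dag V A \<longleftrightarrow> finite V \<and> A \<subseteq> V \<times> V \<and> (\<forall>v. (v, v) \<notin> A\<^sup>+)"

definition leaves :: "'v set \<Rightarrow> ('v \<times> 'v) set \<Rightarrow> 'v set" where
  "leaves V A = {v \<in> V. indeg A v = 1 \<and> outdeg A v = 0}"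

definition hybrid :: "('v \<times> 'v) set \<Rightarrow> 'v \<Rightarrow> bool" where
  "hybrid A v \<longleftrightarrow> indeg A v \<ge> 2 \<and> outdeg A v \<ge> 1"

definition binary_network :: "'v set \<Rightarrow> ('v \<times> 'v) set \<Rightarrow> 'v set \<Rightarrow> bool" where
  "binary_network V A X \<longleftrightarrow>
     is_dag V A \<and>
     (\<exists>!r. r \<in> V \<and> indeg A r = 0) \<and>
     (\<forall>v\<in>V. (indeg A v = 0 \<and> outdeg A v = 2) \<or>
             (indeg A v = 1 \<and> outdeg A v = 0) \<or>
             (indeg A v = 1 \<and> outdeg A v = 2) \<or>
             (indeg A v = 2 \<and> outdeg A v = 1)) \<and>
     leaves V A = X"

definition adj :: "('v \<times> 'v) set \<Rightarrow> 'v \<Rightarrow> 'v \<Rightarrow> bool" where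
  "adj A x y \<longleftrightarrow> (x, y) \<in> A \<or> (y, x) \<in> A"

definition uedges :: "('v \<times> 'v) set \<Rightarrow> 'v set \<Rightarrow> ('v \<times> 'v) set" where
  "uedges A S = {(x, y). x \<in> S \<and> y \<in> S \<and> adj A x y}"

definition uconnected :: "('v \<times> 'v) set \<Rightarrow> 'v set \<Rightarrow> bool" where
  "uconnected A S \<longleftrightarrow> (\<forall>x\<in>S. \<forall>y\<in>S. (x, y) \<in> (uedges A S)\<^sup>*)"

definition biconnected :: "('v \<times> 'v) set \<Rightarrow> 'v set \<Rightarrow> bool" where
  "biconnected A S \<longleftrightarrow> S \<noteq> {} \<and> uconnected A S \<and> (\<forall>v\<in>S. uconnected A (S - {v}))"

definition bicomp :: "'v set \<Rightarrow> ('v \<times> 'v) set \<Rightarrow> 'v set \<Rightarrow> bool" where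
  "bicomp V A S \<longleftrightarrow> S \<subseteq> V \<and> biconnected A S \<and>
     (\<forall>T. S \<subset> T \<and> T \<subseteq> V \<longrightarrow> \<not> biconnected A T)"

definition edges_in :: "('v \<times> 'v) set \<Rightarrow> 'v set \<Rightarrow> ('v \<times> 'v) set" where
  "edges_in A S = {e \<in> A. fst e \<in> S \<and> snd e \<in> S}"

definition binary_level1 :: "'v set \<Rightarrow> ('v \<times> 'v) set \<Rightarrow> 'v set \<Rightarrow> bool" where
  "binary_level1 V A X \<longleftrightarrow>
     binary_network V A X \<and>
     (\<forall>S. bicomp V A S \<longrightarrow> card {v \<in> S. hybrid A v} \<le> 1) \<and>
     \<comment> \<open>standing convention: every cycle of U(N) has at least four vertices (no triangles)\<close>
     \<not> (\<exists>a b c. a \<noteq> b \<and> b \<noteq> c \<and> a \<noteq> c \<and> adj A a b \<and> adj A b c \<and> adj A a c)"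

definition galls :: "'v set \<Rightarrow> ('v \<times> 'v) set \<Rightarrow> 'v set set" where
  "galls V A = {S. bicomp V A S \<and> card (edges_in A S) > 1}"

definition cut_arc :: "'v set \<Rightarrow> ('v \<times> 'v) set \<Rightarrow> 'v \<times> 'v \<Rightarrow> bool" where
  "cut_arc V A e \<longleftrightarrow> e \<in> A \<and> \<not> uconnected (A - {e}) V"

definition nontrivial_cut_arcs :: "'v set \<Rightarrow> ('v \<times> 'v) set \<Rightarrow> ('v \<times> 'v) set" where
  "nontrivial_cut_arcs V A = {e. cut_arc V A e \<and> snd e \<notin> leaves V A}"

definition dpath :: "('v \<times> 'v) set \<Rightarrow> 'v list \<Rightarrow> 'v \<Rightarrow> 'v \<Rightarrow> bool" where
  "dpath A p x y \<longleftrightarrow> p \<noteq> [] \<and> hd p = x \<and> last p = y \<and>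
     (\<forall>i. Suc i < length p \<longrightarrow> (p ! i, p ! Suc i) \<in> A)"

definition interior :: "'v list \<Rightarrow> 'v set" where
  "interior p = set (butlast (tl p))"

definition triplet_consistent :: "'v set \<Rightarrow> ('v \<times> 'v) set \<Rightarrow> 'v \<Rightarrow> 'v \<Rightarrow> 'v \<Rightarrow> bool" where
  "triplet_consistent V A a b c \<longleftrightarrow>
     (\<exists>v w p1 p2 p3 p4. v \<in> V \<and> w \<in> V \<and> v \<noteq> w \<and>
        dpath A p1 v c \<and> dpath A p2 v w \<and> dpath A p3 w a \<and> dpath A p4 w b \<and>
        (\<forall>p\<in>{p1, p2, p3, p4}. \<forall>q\<in>{p1, p2, p3, p4}. p \<noteq> q \<longrightarrow> interior p \<inter> interior q = {}))"

text \<open>R(N): triplet ab|c represented as ({a,b}, c), so ab|c = ba|c.\<close>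
definition triplets :: "'v set \<Rightarrow> ('v \<times> 'v) set \<Rightarrow> ('v set \<times> 'v) set" where
  "triplets V A = {({a, b}, c) | a b c. a \<in> leaves V A \<and> b \<in> leaves V A \<and> c \<in> leaves V A \<and>
      a \<noteq> b \<and> a \<noteq> c \<and> b \<noteq> c \<and> triplet_consistent V A a b c}"

end

theory Submission
  imports Defs
begin

lemma dpath_Cons: "dpath A (x # q) x' y \<longleftrightarrow> x' = x \<and> (if q = [] then y = x else (x, hd q) \<in> A \<and> dpath A q (hd q) y)"
proof (cases q)
  case Nil then show ?thesis by (auto simp: dpath_def)
next
  case (Cons u q')
  have "(\<forall>i. Suc i < length (x # q) \<longrightarrow> ((x#q) ! i, (x#q) ! Suc i) \<in> A) \<longleftrightarrow>
        (x, u) \<in> A \<and> (\<forall>i. Suc i < length q \<longrightarrow> (q ! i, q ! Suc i) \<in> A)"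
    using Cons by (auto simp: less_Suc_eq_0_disj nth_Cons split: nat.splits)
  then show ?thesis using Cons by (auto simp: dpath_def)
qed

lemma dpath_single[simp]: "dpath A [x] x' y \<longleftrightarrow> x' = x \<and> y = x"
  by (auto simp: dpath_def)

lemma dpath_mono: "A \<subseteq> B \<Longrightarrow> dpath A p x y \<Longrightarrow> dpath B p x y"
  by (auto simp: dpath_def)

lemma dpath_trancl: "dpath A p x y \<Longrightarrow> j < length p \<Longrightarrow> i < j \<Longrightarrow> (p!i, p!j) \<in> A\<^sup>+"
proof (induction j)
  case 0 then show ?case by simp
next
  case (Suc j)
  have a: "(p!j, p!Suc j) \<in> A" using Suc.prems by (auto simp: dpath_def)
  show ?case
  proof (cases "i = j")
    case True then show ?thesis using a by auto
  next
    case False then have "(p!i, p!j) \<in> A\<^sup>+" using Suc by auto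
    then show ?thesis using a by auto
  qed
qed

lemma dpath_nth_in: assumes "dpath A p x y" "0 < i" "i < length p" shows "(p!(i-1), p!i) \<in> A"
proof -
  obtain j where j: "i = Suc j" using assms(2) by (cases i) auto
  then show ?thesis using assms(1,3) by (auto simp: dpath_def)
qed

lemma dpath_into: assumes "dpath A p x y" "t \<in> set p" "t \<noteq> x" shows "\<exists>u\<in>set p. (u, t) \<in> A"
proof -
  obtain i where i: "i < length p" "p!i = t" using assms(2) by (auto simp: in_set_conv_nth)
  have "i \<noteq> 0"
  proof
    assume "i = 0" then have "t = x" using i assms(1) by (auto simp: dpath_def hd_conv_nth)
    then show False using assms(3) by simp
  qed
  then obtain j where j: "i = Suc j" by (cases i) auto
  then have "(p!j, p!i) \<in> A" using assms(1) i by (auto simp: dpath_def)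
  moreover have "p!j \<in> set p" using i j by simp
  ultimately show ?thesis using i by blast
qed

lemma dpath_outof: assumes "dpath A p x y" "t \<in> set p" "t \<noteq> y" shows "\<exists>u\<in>set p. (t, u) \<in> A"
proof -
  obtain i where i: "i < length p" "p!i = t" using assms(2) by (auto simp: in_set_conv_nth)
  have "Suc i < length p"
  proof (rule ccontr)
    assume "\<not> Suc i < length p"
    then have "i = length p - 1" using i by simp
    then have "t = y" using assms(1) i by (auto simp: dpath_def last_conv_nth)
    then show False using assms(3) by simp
  qed
  then show ?thesis using assms(1) i by (auto simp: dpath_def)
qed

lemma dpath_last_in: "dpath A p x y \<Longrightarrow> y \<in> set p" by (auto simp: dpath_def)
lemma dpath_hd_in: "dpath A p x y \<Longrightarrow> x \<in> set p" by (auto simp: dpath_def)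

lemma dpath_distinct: assumes "dpath A p x y" "\<forall>v. (v,v) \<notin> A\<^sup>+" shows "distinct p"
  unfolding distinct_conv_nth
proof (intro allI impI)
  fix i j assume ij: "i < length p" "j < length p" "i \<noteq> j"
  show "p!i \<noteq> p!j"
  proof (cases "i < j")
    case True then show ?thesis using dpath_trancl[OF assms(1) ij(2) True] assms(2) by force
  next
    case False then have "j < i" using ij by simp
    then show ?thesis using dpath_trancl[OF assms(1) ij(1)] assms(2) by force
  qed
qed

lemma dpath_length: assumes "dpath A p x y" "A \<subseteq> V \<times> V" "finite V" "\<forall>v. (v,v) \<notin> A\<^sup>+"
  shows "length p \<le> Suc (card V)"
proof (cases "length p \<le> 1")
  case True then show ?thesis by simp
next
  case False
  have "set p \<subseteq> V"
  proof
    fix t assume t: "t \<in> set p"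
    then obtain i where i: "i < length p" "p!i = t" by (auto simp: in_set_conv_nth)
    show "t \<in> V"
    proof (cases i)
      case 0
      then have "(p!0, p!Suc 0) \<in> A" using assms(1) False by (auto simp: dpath_def)
      then show ?thesis using assms(2) i 0 by auto
    next
      case (Suc j)
      then have "(p!j, p!i) \<in> A" using assms(1) i by (auto simp: dpath_def)
      then show ?thesis using assms(2) i by auto
    qed
  qed
  then have "card (set p) \<le> card V" using assms(3) by (simp add: card_mono)
  moreover have "card (set p) = length p" using dpath_distinct[OF assms(1,4)] by (simp add: distinct_card)
  ultimately show ?thesis by simp
qed

fun allp :: "nat \<Rightarrow> ('v\<times>'v) list \<Rightarrow> 'v \<Rightarrow> 'v list list" where
  "allp 0 As x = [[x]]"
| "allp (Suc k) As x = [x] # concat (map (\<lambda>y. map ((#) x) (allp k As y)) (map snd (filter (\<lambda>e. fst e = x) As)))"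

lemma allp_sound: "p \<in> set (allp k As x) \<Longrightarrow> dpath (set As) p x (last p)"
proof (induction k arbitrary: x p)
  case 0 then show ?case by simp
next
  case (Suc k)
  show ?case
  proof (cases "p = [x]")
    case True then show ?thesis by simp
  next
    case False
    then obtain y q where q: "(x,y) \<in> set As" "q \<in> set (allp k As y)" "p = x # q"
      using Suc.prems by auto
    have d: "dpath (set As) q y (last q)" using Suc.IH q(2) .
    then have "q \<noteq> []" "hd q = y" by (auto simp: dpath_def)
    then show ?thesis using d q by (simp add: dpath_Cons)
  qed
qed

lemma allp_complete: "dpath (set As) p x y \<Longrightarrow> length p \<le> Suc k \<Longrightarrow> p \<in> set (allp k As x)"
proof (induction k arbitrary: x p y)
  case 0
  then obtain q where "p = x # q" by (cases p) (auto simp: dpath_def)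
  then show ?case using 0 by simp
next
  case (Suc k)
  obtain q where p: "p = x # q" using Suc.prems by (cases p) (auto simp: dpath_def)
  show ?case
  proof (cases "q = []")
    case True then show ?thesis using p by simp
  next
    case False
    then have "(x, hd q) \<in> set As" "dpath (set As) q (hd q) y" using Suc.prems p by (auto simp: dpath_Cons)
    moreover have "length q \<le> Suc k" using Suc.prems p by simp
    ultimately have "q \<in> set (allp k As (hd q))" "hd q \<in> set (map snd (filter (\<lambda>e. fst e = x) As))"
      using Suc.IH by (force simp: image_iff)+
    then show ?thesis using p by auto
  qed
qed

definition disj4 :: "'v list \<Rightarrow> 'v list \<Rightarrow> 'v list \<Rightarrow> 'v list \<Rightarrow> bool" where
  "disj4 p1 p2 p3 p4 = (\<forall>p\<in>{p1, p2, p3, p4}. \<forall>q\<in>{p1, p2, p3, p4}. p \<noteq> q \<longrightarrow> interior p \<inter> interior q = {})"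

definition chk :: "nat \<Rightarrow> ('v\<times>'v) list \<Rightarrow> 'v list \<Rightarrow> 'v \<Rightarrow> 'v \<Rightarrow> 'v \<Rightarrow> bool" where
 "chk k As Vs a b c = (\<exists>v\<in>set Vs. \<exists>w\<in>set Vs. v \<noteq> w \<and> (\<exists>p1\<in>set (allp k As v). last p1 = c \<and>
    (\<exists>p2\<in>set (allp k As v). last p2 = w \<and> (\<exists>p3\<in>set (allp k As w). last p3 = a \<and>
    (\<exists>p4\<in>set (allp k As w). last p4 = b \<and> disj4 p1 p2 p3 p4)))))"

lemma tc_chk: assumes "set As \<subseteq> V \<times> V" "finite V" "\<forall>v. (v,v) \<notin> (set As)\<^sup>+" "card V \<le> k"
  "set Vs = fst ` set As" "a \<noteq> b"
  shows "triplet_consistent V (set As) a b c \<longleftrightarrow> chk k As Vs a b c"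
proof
  assume "triplet_consistent V (set As) a b c"
  then obtain v w p1 p2 p3 p4 where t: "v \<in> V" "w \<in> V" "v \<noteq> w"
        "dpath (set As) p1 v c" "dpath (set As) p2 v w" "dpath (set As) p3 w a" "dpath (set As) p4 w b"
        "disj4 p1 p2 p3 p4"
    unfolding triplet_consistent_def disj4_def by blast
  have len: "\<And>p x y. dpath (set As) p x y \<Longrightarrow> p \<in> set (allp k As x)"
  proof -
    fix p x y assume d: "dpath (set As) p x y"
    have "length p \<le> Suc k" using dpath_length[OF d assms(1,2,3)] assms(4) by simp
    then show "p \<in> set (allp k As x)" using allp_complete[OF d] by simp
  qed
  have "v \<in> fst ` set As" using dpath_outof[OF t(5) dpath_hd_in[OF t(5)]] t(3) by force
  moreover have "w \<in> fst ` set As"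
  proof (cases "w = a")
    case True then have "w \<noteq> b" using assms(6) by simp
    then show ?thesis using dpath_outof[OF t(7) dpath_hd_in[OF t(7)]] by force
  next
    case False then show ?thesis using dpath_outof[OF t(6) dpath_hd_in[OF t(6)]] by force
  qed
  moreover have "last p1 = c" "last p2 = w" "last p3 = a" "last p4 = b" using t by (auto simp: dpath_def)
  ultimately show "chk k As Vs a b c" unfolding chk_def using t len assms(5) by blast
next
  assume "chk k As Vs a b c"
  then obtain v w p1 p2 p3 p4 where t: "v \<in> fst ` set As" "w \<in> fst ` set As" "v \<noteq> w"
     "p1 \<in> set (allp k As v)" "last p1 = c" "p2 \<in> set (allp k As v)" "last p2 = w"
     "p3 \<in> set (allp k As w)" "last p3 = a" "p4 \<in> set (allp k As w)" "last p4 = b" "disj4 p1 p2 p3 p4"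
    unfolding chk_def assms(5) by blast
  have "v \<in> V" "w \<in> V" using t(1,2) assms(1) by auto
  moreover have "dpath (set As) p1 v c" using allp_sound[OF t(4)] t(5) by simp
  moreover have "dpath (set As) p2 v w" using allp_sound[OF t(6)] t(7) by simp
  moreover have "dpath (set As) p3 w a" using allp_sound[OF t(8)] t(9) by simp
  moreover have "dpath (set As) p4 w b" using allp_sound[OF t(10)] t(11) by simp
  ultimately show "triplet_consistent V (set As) a b c" unfolding triplet_consistent_def
    using t(3,12) unfolding disj4_def by blast
qed

lemma tc_sym: "triplet_consistent V A a b c \<Longrightarrow> triplet_consistent V A b a c"
proof -
  assume "triplet_consistent V A a b c"
  then obtain v w p1 p2 p3 p4 where t: "v \<in> V" "w \<in> V" "v \<noteq> w"
        "dpath A p1 v c" "dpath A p2 v w" "dpath A p3 w a" "dpath A p4 w b"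
        "\<forall>p\<in>{p1, p2, p3, p4}. \<forall>q\<in>{p1, p2, p3, p4}. p \<noteq> q \<longrightarrow> interior p \<inter> interior q = {}"
    unfolding triplet_consistent_def by blast
  have "{p1, p2, p4, p3} = {p1, p2, p3, p4}" by auto
  then show ?thesis unfolding triplet_consistent_def using t by (metis (no_types, lifting))
qed

lemma triplets_card: fixes V :: "'v::linorder set"
  assumes "finite (leaves V A)"
  shows "card (triplets V A) = card (Set.filter (\<lambda>(a,b,c). a < b \<and> a \<noteq> c \<and> b \<noteq> c \<and> triplet_consistent V A a b c)
     (leaves V A \<times> leaves V A \<times> leaves V A))" (is "_ = card ?S")
proof -
  have eq: "triplets V A = (\<lambda>(a,b,c). ({a,b},c)) ` ?S"
  proof
    show "triplets V A \<subseteq> (\<lambda>(a,b,c). ({a,b},c)) ` ?S"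
    proof
      fix t assume "t \<in> triplets V A"
      then obtain a b c where abc: "t = ({a,b},c)" "a \<in> leaves V A" "b \<in> leaves V A" "c \<in> leaves V A"
        "a \<noteq> b" "a \<noteq> c" "b \<noteq> c" "triplet_consistent V A a b c" unfolding triplets_def by blast
      show "t \<in> (\<lambda>(a,b,c). ({a,b},c)) ` ?S"
      proof (cases "a < b")
        case True then show ?thesis using abc by (auto intro!: image_eqI[where x="(a,b,c)"])
      next
        case False then have "b < a" using abc by auto
        then show ?thesis using abc tc_sym[OF abc(8)] by (auto intro!: image_eqI[where x="(b,a,c)"])
      qed
    qed
  next
    show "(\<lambda>(a,b,c). ({a,b},c)) ` ?S \<subseteq> triplets V A"
      unfolding triplets_def by auto
  qed
  have inj: "inj_on (\<lambda>(a,b,c). ({a,b},c)) ?S"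
    by (auto simp: inj_on_def doubleton_eq_iff)
  show ?thesis using eq card_image[OF inj] by simp
qed


definition notri :: "('v\<times>'v) set \<Rightarrow> bool" where
  "notri A \<longleftrightarrow> \<not> (\<exists>a b c. a \<noteq> b \<and> b \<noteq> c \<and> a \<noteq> c \<and> adj A a b \<and> adj A b c \<and> adj A a c)"

definition pairQ :: "('v\<times>'v) set \<Rightarrow> 'v \<Rightarrow> 'v set \<Rightarrow> bool" where
  "pairQ A r X \<longleftrightarrow> (\<forall>a\<in>X. \<forall>b\<in>X. a \<noteq> b \<longrightarrow> (\<exists>w p2 p3 p4. dpath A p2 r w \<and> dpath A p3 w a \<and> dpath A p4 w b \<and>
      interior p2 \<inter> interior p3 = {} \<and> interior p2 \<inter> interior p4 = {} \<and> interior p3 \<inter> interior p4 = {}))"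

definition reachQ :: "('v\<times>'v) set \<Rightarrow> 'v \<Rightarrow> 'v set \<Rightarrow> bool" where
  "reachQ A r X \<longleftrightarrow> (\<forall>a\<in>X. \<exists>p. dpath A p r a)"

definition good :: "'v set \<Rightarrow> ('v\<times>'v) set \<Rightarrow> 'v set \<Rightarrow> 'v \<Rightarrow> bool" where
  "good V A X r \<longleftrightarrow> binary_network V A X \<and> r \<in> V \<and> (\<forall>u. (u,r) \<notin> A) \<and>
     card {v\<in>V. hybrid A v} \<le> 1 \<and> notri A \<and> (\<exists>rk::'v\<Rightarrow>nat. \<forall>(u,v)\<in>A. rk u < rk v) \<and>
     pairQ A r X \<and> reachQ A r X"

lemma rank_trancl: assumes "\<forall>(u,v)\<in>A. rk u < (rk v::nat)" shows "(x,y) \<in> A\<^sup>+ \<Longrightarrow> rk x < rk y"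
proof -
  have h: "rk u < rk v" if "(u,v) \<in> A" for u v using assms that by blast
  show "(x,y) \<in> A\<^sup>+ \<Longrightarrow> rk x < rk y"
  proof (induction rule: trancl_induct)
    case (base y) then show ?case using h by blast
  next
    case (step y w)
    then show ?case using h[OF step(2)] by simp
  qed
qed

lemma rank_acyclic: assumes "\<forall>(u,v)\<in>A. rk u < (rk v::nat)" shows "(v,v) \<notin> A\<^sup>+"
proof
  assume "(v,v) \<in> A\<^sup>+" then have "rk v < rk v" by (rule rank_trancl[OF assms])
  then show False by simp
qed

lemma indeg_set: "indeg (set As) v = card (set (map fst (filter (\<lambda>e. snd e = v) As)))"
  unfolding indeg_def by (rule arg_cong[where f=card]) force

lemma outdeg_set: "outdeg (set As) v = card (set (map snd (filter (\<lambda>e. fst e = v) As)))"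
  unfolding outdeg_def by (rule arg_cong[where f=card]) force

definition nbrs :: "('v\<times>'v) list \<Rightarrow> 'v \<Rightarrow> 'v list" where
  "nbrs As a = map snd (filter (\<lambda>e. fst e = a) As) @ map fst (filter (\<lambda>e. snd e = a) As)"

lemma nbrs_iff: "b \<in> set (nbrs As a) \<longleftrightarrow> adj (set As) a b"
proof -
  have "b \<in> set (nbrs As a) \<longleftrightarrow> b \<in> snd ` {e\<in>set As. fst e = a} \<or> b \<in> fst ` {e\<in>set As. snd e = a}"
    unfolding nbrs_def by simp
  also have "\<dots> \<longleftrightarrow> (a,b) \<in> set As \<or> (b,a) \<in> set As"
  proof
    assume "b \<in> snd ` {e\<in>set As. fst e = a} \<or> b \<in> fst ` {e\<in>set As. snd e = a}"
    then show "(a,b) \<in> set As \<or> (b,a) \<in> set As"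
    proof
      assume "b \<in> snd ` {e\<in>set As. fst e = a}"
      then obtain e where e: "e \<in> set As" "fst e = a" "b = snd e" by blast
      then have "e = (a,b)" by (simp add: prod_eq_iff)
      then show ?thesis using e(1) by simp
    next
      assume "b \<in> fst ` {e\<in>set As. snd e = a}"
      then obtain e where e: "e \<in> set As" "snd e = a" "b = fst e" by blast
      then have "e = (b,a)" by (simp add: prod_eq_iff)
      then show ?thesis using e(1) by simp
    qed
  next
    assume "(a,b) \<in> set As \<or> (b,a) \<in> set As"
    then show "b \<in> snd ` {e\<in>set As. fst e = a} \<or> b \<in> fst ` {e\<in>set As. snd e = a}"
    proof
      assume "(a,b) \<in> set As" then have "b \<in> snd ` {e\<in>set As. fst e = a}" by (rule_tac x="(a,b)" in image_eqI) auto
      then show ?thesis ..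
    next
      assume "(b,a) \<in> set As" then have "b \<in> fst ` {e\<in>set As. snd e = a}" by (rule_tac x="(b,a)" in image_eqI) auto
      then show ?thesis ..
    qed
  qed
  finally show ?thesis unfolding adj_def .
qed

lemma notri_check: assumes "set As \<subseteq> V \<times> V"
  "\<forall>a\<in>V. \<forall>b\<in>set (nbrs As a). \<forall>c\<in>set (nbrs As a). b = c \<or> ((b,c) \<notin> set As \<and> (c,b) \<notin> set As)"
  shows "notri (set As)"
  unfolding notri_def
proof (intro notI, elim exE conjE)
  fix a b c assume t: "a \<noteq> b" "b \<noteq> c" "a \<noteq> c" "adj (set As) a b" "adj (set As) b c" "adj (set As) a c"
  have "(a,b) \<in> set As \<or> (b,a) \<in> set As" using t(4) unfolding adj_def .
  then have aV: "a \<in> V" using assms(1) by auto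
  have "b \<in> set (nbrs As a)" using t(4) nbrs_iff by metis
  moreover have "c \<in> set (nbrs As a)" using t(6) nbrs_iff by metis
  ultimately have "b = c \<or> ((b,c) \<notin> set As \<and> (c,b) \<notin> set As)" using assms(2) aV by simp
  moreover have "(b,c) \<in> set As \<or> (c,b) \<in> set As" using t(5) unfolding adj_def .
  ultimately show False using t(2) by simp
qed

definition chkQ :: "nat \<Rightarrow> ('v\<times>'v) list \<Rightarrow> 'v \<Rightarrow> 'v \<Rightarrow> 'v \<Rightarrow> bool" where
  "chkQ k As r a b = (\<exists>p2\<in>set (allp k As r). \<exists>p3\<in>set (allp k As (last p2)). last p3 = a \<and>
     (\<exists>p4\<in>set (allp k As (last p2)). last p4 = b \<and>
      interior p2 \<inter> interior p3 = {} \<and> interior p2 \<inter> interior p4 = {} \<and> interior p3 \<inter> interior p4 = {}))"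

lemma pairQ_check: assumes "\<forall>a\<in>X. \<forall>b\<in>X. a \<noteq> b \<longrightarrow> chkQ k As r a b" shows "pairQ (set As) r X"
  unfolding pairQ_def
proof (intro ballI impI)
  fix a b assume ab: "a \<in> X" "b \<in> X" "a \<noteq> b"
  then obtain p2 p3 p4 where p: "p2 \<in> set (allp k As r)" "p3 \<in> set (allp k As (last p2))" "last p3 = a"
    "p4 \<in> set (allp k As (last p2))" "last p4 = b"
    "interior p2 \<inter> interior p3 = {}" "interior p2 \<inter> interior p4 = {}" "interior p3 \<inter> interior p4 = {}"
    using assms unfolding chkQ_def by blast
  have "dpath (set As) p2 r (last p2)" using allp_sound[OF p(1)] .
  moreover have "dpath (set As) p3 (last p2) a" using allp_sound[OF p(2)] p(3) by simp
  moreover have "dpath (set As) p4 (last p2) b" using allp_sound[OF p(4)] p(5) by simp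
  ultimately show "\<exists>w p2 p3 p4. dpath (set As) p2 r w \<and> dpath (set As) p3 w a \<and> dpath (set As) p4 w b \<and>
      interior p2 \<inter> interior p3 = {} \<and> interior p2 \<inter> interior p4 = {} \<and> interior p3 \<inter> interior p4 = {}"
    using p(6-8) by blast
qed

lemma reachQ_check: assumes "\<forall>a\<in>X. \<exists>p\<in>set (allp k As r). last p = a" shows "reachQ (set As) r X"
  unfolding reachQ_def
proof
  fix a assume "a \<in> X"
  then obtain p where "p \<in> set (allp k As r)" "last p = a" using assms by blast
  then have "dpath (set As) p r a" using allp_sound by fastforce
  then show "\<exists>p. dpath (set As) p r a" by blast
qed

lemma bn_check: assumes "set As \<subseteq> V \<times> V" "finite V" "\<forall>(u,v)\<in>set As. rk u < (rk v::nat)" "r \<in> V"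
  "\<forall>v\<in>V. indeg (set As) v = 0 \<longleftrightarrow> v = r"
  "\<forall>v\<in>V. (indeg (set As) v = 0 \<and> outdeg (set As) v = 2) \<or>
             (indeg (set As) v = 1 \<and> outdeg (set As) v = 0) \<or>
             (indeg (set As) v = 1 \<and> outdeg (set As) v = 2) \<or>
             (indeg (set As) v = 2 \<and> outdeg (set As) v = 1)"
  "Set.filter (\<lambda>v. indeg (set As) v = 1 \<and> outdeg (set As) v = 0) V = X"
shows "binary_network V (set As) X"
proof -
  have dag: "is_dag V (set As)" unfolding is_dag_def using assms(1,2) rank_acyclic[OF assms(3)] by blast
  have root: "\<exists>!r. r \<in> V \<and> indeg (set As) r = 0" using assms(4,5) by (intro ex1I[where a=r]) auto
  have lv: "leaves V (set As) = X" using assms(7) unfolding leaves_def by simp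
  show ?thesis unfolding binary_network_def using dag root lv assms(6) by blast
qed

definition As1 :: "(nat\<times>nat) list" where "As1 = [(0,1),(2,1),(3,2),(4,3),(0,4),(1,5),(2,6),(3,7),(4,8),(8,9),(8,10)]"
definition As2 :: "(nat\<times>nat) list" where "As2 = [(0,1),(1,2),(2,3),(3,4),(0,4),(1,5),(2,6),(3,7),(4,8),(8,9),(8,10)]"
definition rk1 :: "nat \<Rightarrow> nat" where "rk1 v = (if v=1 then 4 else if v=2 then 3 else if v=3 then 2 else if v=4 then 1 else v)"


lemma interior_Cons[simp]: "interior (x # q) = set (butlast q)"
  by (simp add: interior_def)

lemma interior_in: assumes "u \<in> interior p" "dpath A p x y" shows "\<exists>u'. (u', u) \<in> A"
proof -
  have "u \<in> set (tl p)" using assms(1) unfolding interior_def by (rule in_set_butlastD)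
  then obtain j where j: "j < length (tl p)" "tl p ! j = u" by (auto simp: in_set_conv_nth)
  then have "Suc j < length p" "p ! Suc j = u" by (auto simp: nth_tl)
  then have "(p!j, u) \<in> A" using assms(2) unfolding dpath_def by blast
  then show ?thesis by blast
qed

lemma butlast_sub: "q \<noteq> [] \<Longrightarrow> hd q = r \<Longrightarrow> set (butlast q) \<subseteq> insert r (interior q)"
  by (cases q) (auto simp: interior_def)

lemma first_step: assumes "dpath A P x y" "y \<noteq> x"
  shows "(x, P!1) \<in> A \<and> ((P!1 = y \<and> length P = 2) \<or> (P!1 \<in> set (butlast (tl P)) \<and> (P!1, P!2) \<in> A))"
proof -
  obtain q where P: "P = x # q" using assms(1) by (cases P) (auto simp: dpath_def)
  then have q: "q \<noteq> []" "(x, hd q) \<in> A" "dpath A q (hd q) y" using assms by (auto simp: dpath_Cons split: if_splits)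
  then obtain u rest where q2: "q = u # rest" by (cases q) auto
  show ?thesis
  proof (cases "rest = []")
    case True then show ?thesis using q q2 P by (auto simp: dpath_Cons)
  next
    case False
    then have "(u, hd rest) \<in> A" using q q2 by (auto simp: dpath_Cons split: if_splits)
    moreover have "hd rest = rest ! 0" using False by (simp add: hd_conv_nth)
    ultimately show ?thesis using q q2 P False by auto
  qed
qed

lemma two_same: assumes "dpath A P x y1" "dpath A Q x y2" "y1 \<noteq> x" "y2 \<noteq> x" "y1 \<noteq> y2"
  "\<forall>w. (y1,w) \<notin> A" "\<forall>w. (y2,w) \<notin> A" "P!1 = Q!1"
  "set (butlast (tl P)) \<inter> set (butlast (tl Q)) = {}" shows False
  using first_step[OF assms(1,3)] first_step[OF assms(2,4)] assms(5-9) by auto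

lemma three_paths:
  assumes "finite {w. (x,w)\<in>A}" "card {w. (x,w) \<in> A} \<le> 2"
    "dpath A P1 x y1" "dpath A P2 x y2" "dpath A P3 x y3"
    "y1 \<noteq> x" "y2 \<noteq> x" "y3 \<noteq> x" "y1 \<noteq> y2" "y1 \<noteq> y3" "y2 \<noteq> y3"
    "\<forall>w. (y1,w)\<notin>A" "\<forall>w. (y2,w)\<notin>A" "\<forall>w. (y3,w)\<notin>A"
    "set (butlast (tl P1)) \<inter> set (butlast (tl P2)) = {}"
    "set (butlast (tl P1)) \<inter> set (butlast (tl P3)) = {}"
    "set (butlast (tl P2)) \<inter> set (butlast (tl P3)) = {}"
  shows False
proof -
  have c: "P1!1 \<in> {w. (x,w)\<in>A}" "P2!1 \<in> {w. (x,w)\<in>A}" "P3!1 \<in> {w. (x,w)\<in>A}"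
    using first_step[OF assms(3,6)] first_step[OF assms(4,7)] first_step[OF assms(5,8)] by auto
  show False
  proof (cases "P1!1 = P2!1")
    case True then show ?thesis using two_same[OF assms(3,4,6,7,9,12,13) True assms(15)] by simp
  next
    case F1: False
    show ?thesis
    proof (cases "P1!1 = P3!1")
      case True then show ?thesis using two_same[OF assms(3,5,6,8,10,12,14) True assms(16)] by simp
    next
      case F2: False
      show ?thesis
      proof (cases "P2!1 = P3!1")
        case True then show ?thesis using two_same[OF assms(4,5,7,8,11,13,14) True assms(17)] by simp
      next
        case F3: False
        have "card {P1!1, P2!1, P3!1} = 3" using F1 F2 F3 by simp
        moreover have "card {P1!1, P2!1, P3!1} \<le> card {w. (x,w)\<in>A}" using c assms(1) by (intro card_mono) auto
        ultimately show False using assms(2) by simp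
      qed
    qed
  qed
qed

definition newT :: "'v set \<Rightarrow> 'v \<Rightarrow> ('v set \<times> 'v) set" where
  "newT X z = {({a,b}, z) | a b. a \<in> X \<and> b \<in> X \<and> a \<noteq> b}"

lemma tc_mono: assumes "V \<subseteq> V2" "A \<subseteq> A2" "triplet_consistent V A a b c" shows "triplet_consistent V2 A2 a b c"
proof -
  obtain v w p1 p2 p3 p4 where t: "v \<in> V" "w \<in> V" "v \<noteq> w"
        "dpath A p1 v c" "dpath A p2 v w" "dpath A p3 w a" "dpath A p4 w b"
        "\<forall>p\<in>{p1, p2, p3, p4}. \<forall>q\<in>{p1, p2, p3, p4}. p \<noteq> q \<longrightarrow> interior p \<inter> interior q = {}"
    using assms(3) unfolding triplet_consistent_def by blast
  have "v \<in> V2" "w \<in> V2" using t(1,2) assms(1) by auto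
  moreover have "dpath A2 p1 v c" "dpath A2 p2 v w" "dpath A2 p3 w a" "dpath A2 p4 w b"
    using t(4-7) dpath_mono[OF assms(2)] by auto
  ultimately show ?thesis unfolding triplet_consistent_def using t(3,8) by blast
qed

lemma hd_butlast: "q \<noteq> [] \<Longrightarrow> hd q \<noteq> last q \<Longrightarrow> hd q \<in> set (butlast q)"
  by (cases q) auto

lemma butlast_tl_sub: "set (butlast (tl q)) \<subseteq> set (butlast q)"
  by (cases q) auto

context
  fixes V :: "'v set" and A X r r' z
  assumes gd: "good V A X r" and fr: "r' \<notin> V" "z \<notin> V" "r' \<noteq> z"
begin

abbreviation "A' \<equiv> insert (r',r) (insert (r',z) A)"
abbreviation "V' \<equiv> insert r' (insert z V)"

lemma bn: "binary_network V A X" using gd by (simp add: good_def)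
lemma fin: "finite V" using bn by (simp add: binary_network_def is_dag_def)
lemma AV: "A \<subseteq> V \<times> V" using bn by (simp add: binary_network_def is_dag_def)
lemma rV: "r \<in> V" using gd by (simp add: good_def)
lemma rin: "(u,r) \<notin> A" using gd by (simp add: good_def)
lemma lvs: "leaves V A = X" using bn by (simp add: binary_network_def)
lemma XV: "X \<subseteq> V" using lvs unfolding leaves_def by auto
lemma deg: "v \<in> V \<Longrightarrow> (indeg A v = 0 \<and> outdeg A v = 2) \<or>
             (indeg A v = 1 \<and> outdeg A v = 0) \<or>
             (indeg A v = 1 \<and> outdeg A v = 2) \<or>
             (indeg A v = 2 \<and> outdeg A v = 1)" using bn by (simp add: binary_network_def)
lemma indeg_r: "indeg A r = 0" using rin by (simp add: indeg_def)
lemma root_unique: "v \<in> V \<Longrightarrow> indeg A v = 0 \<Longrightarrow> v = r"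
  using bn rV indeg_r unfolding binary_network_def by blast
lemma out_r: "outdeg A r = 2" using deg[OF rV] indeg_r by simp
lemma fin_out: "finite {w. (v,w) \<in> A}"
proof -
  have "{w. (v,w)\<in>A} \<subseteq> V" using AV by auto
  then show ?thesis using fin by (rule finite_subset)
qed
lemma leaf_noout: "a \<in> X \<Longrightarrow> (a,w) \<notin> A"
proof
  assume "a \<in> X" "(a,w) \<in> A"
  then have "outdeg A a = 0" using lvs unfolding leaves_def by auto
  then have "{w. (a,w)\<in>A} = {}" using fin_out[of a] by (simp add: outdeg_def)
  then show False using \<open>(a,w)\<in>A\<close> by auto
qed
lemma rX: "r \<notin> X" using indeg_r lvs unfolding leaves_def by auto
lemma rne: "r \<noteq> r'" "r \<noteq> z" using rV fr by auto

lemma into_r': "(u, r') \<notin> A'" using AV fr rne by auto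
lemma out_z: "(z, w) \<notin> A'" using AV fr by auto
lemma into_z: "(u, z) \<in> A' \<Longrightarrow> u = r'" using AV fr by auto
lemma A'_old: "(u, w) \<in> A' \<Longrightarrow> u \<noteq> r' \<Longrightarrow> (u, w) \<in> A" by auto
lemma X'_noout: "a \<in> insert z X \<Longrightarrow> (a, w) \<notin> A'"
  using out_z leaf_noout XV fr by auto

lemma P_hd: "dpath A' p x y \<Longrightarrow> r' \<in> set p \<Longrightarrow> x = r'"
  using dpath_into into_r' by metis
lemma P_restrict: assumes "dpath A' p x y" "x \<noteq> r'" shows "dpath A p x y"
  unfolding dpath_def
proof (intro conjI allI impI)
  show "p \<noteq> []" "hd p = x" "last p = y" using assms by (auto simp: dpath_def)
  fix i assume i: "Suc i < length p"
  then have "(p!i, p!Suc i) \<in> A'" using assms by (auto simp: dpath_def)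
  moreover have "p!i \<noteq> r'" using P_hd[OF assms(1)] assms(2) i by (metis Suc_lessD nth_mem)
  ultimately show "(p!i, p!Suc i) \<in> A" by auto
qed
lemma P_leaf: "dpath A' p x y \<Longrightarrow> x \<in> insert z X \<Longrightarrow> y = x"
  using dpath_outof dpath_hd_in X'_noout by metis
lemma P_into_z: assumes "dpath A' p x z" "x \<noteq> z" shows "x = r'"
proof -
  obtain u where "u \<in> set p" "(u,z) \<in> A'" using dpath_into[OF assms(1) dpath_last_in[OF assms(1)]] assms(2) by auto
  then show ?thesis using into_z P_hd[OF assms(1)] by blast
qed

lemma indeg_new: "indeg A' v = (if v = r \<or> v = z then 1 else indeg A v)"
proof -
  have "{u. (u,v) \<in> A'} = (if v = r \<or> v = z then {r'} else {u. (u,v) \<in> A})"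
    using rin AV fr rne by auto
  then show ?thesis unfolding indeg_def by simp
qed

lemma outdeg_new: "outdeg A' v = (if v = r' then 2 else outdeg A v)"
proof -
  have "{w. (v,w) \<in> A'} = (if v = r' then {r, z} else {w. (v,w) \<in> A})"
    using AV fr rne by auto
  then show ?thesis unfolding outdeg_def using rne by simp
qed

lemma indeg_r': "indeg A r' = 0"
proof -
  have "{u. (u,r')\<in>A} = {}" using AV fr by auto
  then show ?thesis by (simp add: indeg_def)
qed
lemma outdeg_z: "outdeg A z = 0"
proof -
  have "{w. (z,w)\<in>A} = {}" using AV fr by auto
  then show ?thesis by (simp add: outdeg_def)
qed

lemma leaves_new: "leaves V' A' = insert z X"
proof (rule set_eqI)
  fix v
  show "v \<in> leaves V' A' \<longleftrightarrow> v \<in> insert z X"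
  proof (cases "v = r' \<or> v = z \<or> v = r")
    case True
    have "r' \<notin> X" "z \<notin> X" using XV fr by auto
    then show ?thesis using True out_r rne fr rX outdeg_z unfolding leaves_def by (auto simp: indeg_new outdeg_new)
  next
    case False
    then have "v \<in> leaves V' A' \<longleftrightarrow> v \<in> leaves V A" unfolding leaves_def by (auto simp: indeg_new outdeg_new)
    then show ?thesis using lvs False by auto
  qed
qed

lemma rank_new: "\<exists>rk'::'v\<Rightarrow>nat. \<forall>(u,v)\<in>A'. rk' u < rk' v"
proof -
  obtain rk :: "'v \<Rightarrow> nat" where rk: "\<forall>(u,v)\<in>A. rk u < rk v" using gd by (auto simp: good_def)
  define rk' where "rk' x = (if x = r' then 0 else Suc (rk x))" for x
  have "rk' u < rk' v" if uv: "(u,v) \<in> A'" for u v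
  proof (cases "u = r'")
    case True
    then have "v \<noteq> r'" using uv into_r' by blast
    then show ?thesis using True by (simp add: rk'_def)
  next
    case False
    then have "(u,v) \<in> A" using uv by blast
    moreover then have "v \<noteq> r'" using into_r' by blast
    ultimately show ?thesis using False rk by (auto simp: rk'_def)
  qed
  then show ?thesis by blast
qed

lemma bn_new: "binary_network V' A' (insert z X)"
proof -
  obtain rk' :: "'v \<Rightarrow> nat" where rk': "\<forall>(u,v)\<in>A'. rk' u < rk' v" using rank_new by blast
  have acyc: "\<forall>v. (v,v) \<notin> A'\<^sup>+" using rank_acyclic[OF rk'] by blast
  have dag: "is_dag V' A'" unfolding is_dag_def using fin AV acyc rV by auto
  have root: "\<exists>!x. x \<in> V' \<and> indeg A' x = 0"
  proof (rule ex1I[where a=r'])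
    show "r' \<in> V' \<and> indeg A' r' = 0" using indeg_r' fr rne by (simp add: indeg_new)
  next
    fix x assume "x \<in> V' \<and> indeg A' x = 0"
    then show "x = r'" using root_unique by (auto simp: indeg_new split: if_splits)
  qed
  have dg: "\<forall>v\<in>V'. (indeg A' v = 0 \<and> outdeg A' v = 2) \<or>
             (indeg A' v = 1 \<and> outdeg A' v = 0) \<or>
             (indeg A' v = 1 \<and> outdeg A' v = 2) \<or>
             (indeg A' v = 2 \<and> outdeg A' v = 1)"
  proof
    fix v assume v: "v \<in> V'"
    show "(indeg A' v = 0 \<and> outdeg A' v = 2) \<or>
             (indeg A' v = 1 \<and> outdeg A' v = 0) \<or>
             (indeg A' v = 1 \<and> outdeg A' v = 2) \<or>
             (indeg A' v = 2 \<and> outdeg A' v = 1)"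
    proof (cases "v = r' \<or> v = z \<or> v = r")
      case True then show ?thesis using indeg_r' outdeg_z out_r rne fr by (auto simp: indeg_new outdeg_new)
    next
      case False then have "v \<in> V" using v by auto
      then show ?thesis using deg[of v] False by (simp add: indeg_new outdeg_new)
    qed
  qed
  show ?thesis unfolding binary_network_def using dag root dg leaves_new by blast
qed

lemma hyb_new: "{v\<in>V'. hybrid A' v} = {v\<in>V. hybrid A v}"
  using indeg_r' indeg_r rne fr by (auto simp: hybrid_def indeg_new outdeg_new)

lemma notri_new: "notri A'"
proof -
  have nt: "notri A" using gd by (simp add: good_def)
  have adj': "adj A' x y \<longleftrightarrow> adj A x y \<or> (x = r' \<and> (y = r \<or> y = z)) \<or> (y = r' \<and> (x = r \<or> x = z))" for x y
    by (auto simp: adj_def)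
  have adjV: "adj A x y \<Longrightarrow> x \<in> V \<and> y \<in> V" for x y using AV by (auto simp: adj_def)
  show ?thesis unfolding notri_def
  proof
    assume "\<exists>a b c. a \<noteq> b \<and> b \<noteq> c \<and> a \<noteq> c \<and> adj A' a b \<and> adj A' b c \<and> adj A' a c"
    then obtain a b c where t: "a \<noteq> b" "b \<noteq> c" "a \<noteq> c" "adj A' a b" "adj A' b c" "adj A' a c" by blast
    show False
    proof (cases "r' \<in> {a,b,c} \<or> z \<in> {a,b,c}")
      case True
      then show False using t unfolding adj' using adjV fr rne by auto
    next
      case False
      then have "adj A a b" "adj A b c" "adj A a c" using t unfolding adj' by auto
      then show False using nt t unfolding notri_def by blast
    qed
  qed
qed

lemma reach: "a \<in> X \<Longrightarrow> \<exists>p. dpath A p r a" using gd by (auto simp: good_def reachQ_def)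

lemma int_no_r: "dpath A p x y \<Longrightarrow> r \<notin> interior p"
  using interior_in rin by metis

lemma dmono: "dpath A p x y \<Longrightarrow> dpath A' p x y" by (rule dpath_mono[of A A']) auto

lemma path_from_r: assumes d: "dpath A p r w" shows "dpath A' (r' # p) r' w"
proof -
  have "p \<noteq> []" "hd p = r" using d by (auto simp: dpath_def)
  then show ?thesis using dmono[OF d] by (simp add: dpath_Cons)
qed

lemma int_r'p: "dpath A p r w \<Longrightarrow> interior (r' # p) \<subseteq> insert r (interior p)"
  using butlast_sub[of p r] by (auto simp: dpath_def)

lemma pairQ_new: "pairQ A' r' (insert z X)"
  unfolding pairQ_def
proof (intro ballI impI)
  fix a b assume ab: "a \<in> insert z X" "b \<in> insert z X" "a \<noteq> b"
  show "\<exists>w p2 p3 p4. dpath A' p2 r' w \<and> dpath A' p3 w a \<and> dpath A' p4 w b \<and>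
      interior p2 \<inter> interior p3 = {} \<and> interior p2 \<inter> interior p4 = {} \<and> interior p3 \<inter> interior p4 = {}"
  proof (cases "a = z")
    case True
    then have b: "b \<in> X" using ab by auto
    obtain q where q: "dpath A q r b" using reach[OF b] by blast
    have "dpath A' [r', z] r' z" by (simp add: dpath_Cons)
    moreover have "dpath A' (r' # q) r' b" using path_from_r[OF q] .
    ultimately show ?thesis using True
      by (intro exI[of _ r'] exI[of _ "[r']"] exI[of _ "[r',z]"] exI[of _ "r' # q"]) auto
  next
    case az: False
    show ?thesis
    proof (cases "b = z")
      case True
      then have a: "a \<in> X" using ab az by auto
      obtain q where q: "dpath A q r a" using reach[OF a] by blast
      have "dpath A' [r', z] r' z" by (simp add: dpath_Cons)
      moreover have "dpath A' (r' # q) r' a" using path_from_r[OF q] .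
      ultimately show ?thesis using True
        by (intro exI[of _ r'] exI[of _ "[r']"] exI[of _ "r' # q"] exI[of _ "[r',z]"]) auto
    next
      case False
      then have a: "a \<in> X" "b \<in> X" using ab az by auto
      then obtain w p2 p3 p4 where q: "dpath A p2 r w" "dpath A p3 w a" "dpath A p4 w b"
        "interior p2 \<inter> interior p3 = {}" "interior p2 \<inter> interior p4 = {}" "interior p3 \<inter> interior p4 = {}"
        using gd ab(3) unfolding good_def pairQ_def by blast
      have "interior (r' # p2) \<inter> interior p3 = {}" "interior (r' # p2) \<inter> interior p4 = {}"
        using int_r'p[OF q(1)] int_no_r[OF q(2)] int_no_r[OF q(3)] q(4,5) by blast+
      then show ?thesis using path_from_r[OF q(1)] dmono[OF q(2)] dmono[OF q(3)] q(6) by blast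
    qed
  qed
qed

lemma reachQ_new: "reachQ A' r' (insert z X)"
  unfolding reachQ_def
proof
  fix a assume "a \<in> insert z X"
  then show "\<exists>p. dpath A' p r' a"
  proof
    assume "a = z" then show ?thesis by (intro exI[of _ "[r', z]"]) (simp add: dpath_Cons)
  next
    assume "a \<in> X" then show ?thesis using reach path_from_r by blast
  qed
qed

lemma good_new: "good V' A' (insert z X) r'"
proof -
  obtain rk' :: "'v \<Rightarrow> nat" where "\<forall>(u,v)\<in>A'. rk' u < rk' v" using rank_new by blast
  moreover have "card {v\<in>V'. hybrid A' v} \<le> 1" using gd hyb_new by (simp add: good_def)
  ultimately show ?thesis unfolding good_def using bn_new notri_new pairQ_new reachQ_new into_r' by blast
qed


lemma T_sup1: "triplets V A \<subseteq> triplets V' A'"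
proof
  fix t assume "t \<in> triplets V A"
  then obtain a b c where abc: "t = ({a,b},c)" "a \<in> leaves V A" "b \<in> leaves V A" "c \<in> leaves V A"
    "a \<noteq> b" "a \<noteq> c" "b \<noteq> c" "triplet_consistent V A a b c" unfolding triplets_def by blast
  have "triplet_consistent V' A' a b c" by (rule tc_mono[OF _ _ abc(8)]) auto
  moreover have "a \<in> leaves V' A'" "b \<in> leaves V' A'" "c \<in> leaves V' A'" using abc(2-4) lvs leaves_new by auto
  ultimately show "t \<in> triplets V' A'" unfolding triplets_def using abc(1,5-7) by blast
qed

lemma T_sup2: "newT X z \<subseteq> triplets V' A'"
proof
  fix t assume "t \<in> newT X z"
  then obtain a b where ab: "t = ({a,b},z)" "a \<in> X" "b \<in> X" "a \<noteq> b" unfolding newT_def by blast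
  then obtain w q2 q3 q4 where q: "dpath A q2 r w" "dpath A q3 w a" "dpath A q4 w b"
        "interior q2 \<inter> interior q3 = {}" "interior q2 \<inter> interior q4 = {}" "interior q3 \<inter> interior q4 = {}"
    using gd unfolding good_def pairQ_def by blast
  have wV: "w \<in> V"
  proof (cases "w = r")
    case True then show ?thesis using rV by simp
  next
    case False
    then obtain u where "(u,w) \<in> A" using dpath_into[OF q(1) dpath_last_in[OF q(1)]] by blast
    then show ?thesis using AV by auto
  qed
  define P1 where "P1 = [r', z]"
  define P2 where "P2 = r' # q2"
  have d1: "dpath A' P1 r' z" unfolding P1_def by (simp add: dpath_Cons)
  have d2: "dpath A' P2 r' w" unfolding P2_def by (rule path_from_r[OF q(1)])
  have i1: "interior P1 = {}" unfolding P1_def by simp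
  have i2: "interior P2 \<subseteq> insert r (interior q2)" unfolding P2_def by (rule int_r'p[OF q(1)])
  have "r \<notin> interior q3" "r \<notin> interior q4" using int_no_r q(2,3) by auto
  then have D: "interior P1 \<inter> interior P2 = {}" "interior P1 \<inter> interior q3 = {}" "interior P1 \<inter> interior q4 = {}"
     "interior P2 \<inter> interior q3 = {}" "interior P2 \<inter> interior q4 = {}" "interior q3 \<inter> interior q4 = {}"
    using i1 i2 q(4-6) by blast+
  have DD: "\<forall>p\<in>{P1, P2, q3, q4}. \<forall>q\<in>{P1, P2, q3, q4}. p \<noteq> q \<longrightarrow> interior p \<inter> interior q = {}"
    using D by (simp add: Int_commute)
  have "r' \<noteq> w" using wV fr by auto
  moreover have "r' \<in> V'" "w \<in> V'" using wV by auto
  ultimately have "triplet_consistent V' A' a b z" unfolding triplet_consistent_def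
    using d1 d2 dmono[OF q(2)] dmono[OF q(3)] DD by blast
  moreover have "a \<noteq> z" "b \<noteq> z" using ab XV fr by auto
  moreover have "a \<in> leaves V' A'" "b \<in> leaves V' A'" "z \<in> leaves V' A'" using ab leaves_new by auto
  ultimately show "t \<in> triplets V' A'" unfolding triplets_def using ab(1,4) by blast
qed

lemma T_sub: "triplets V' A' \<subseteq> triplets V A \<union> newT X z"
proof
  fix t assume "t \<in> triplets V' A'"
  then obtain a b c where abc: "t = ({a,b},c)" "a \<in> insert z X" "b \<in> insert z X" "c \<in> insert z X"
    "a \<noteq> b" "a \<noteq> c" "b \<noteq> c" "triplet_consistent V' A' a b c" unfolding triplets_def leaves_new by blast
  obtain v w p1 p2 p3 p4 where t: "v \<in> V'" "w \<in> V'" "v \<noteq> w"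
        "dpath A' p1 v c" "dpath A' p2 v w" "dpath A' p3 w a" "dpath A' p4 w b"
        "\<forall>p\<in>{p1, p2, p3, p4}. \<forall>q\<in>{p1, p2, p3, p4}. p \<noteq> q \<longrightarrow> interior p \<inter> interior q = {}"
    using abc(8) unfolding triplet_consistent_def by blast
  have lp: "last p1 = c" "last p2 = w" "last p3 = a" "last p4 = b" using t(4-7) by (auto simp: dpath_def)
  have wr': "w \<noteq> r'"
  proof
    assume "w = r'"
    then have "r' \<in> set p2" using dpath_last_in[OF t(5)] by simp
    then have "v = r'" using P_hd[OF t(5)] by simp
    then show False using t(3) \<open>w = r'\<close> by simp
  qed
  have wX: "w \<notin> insert z X"
  proof
    assume "w \<in> insert z X"
    then have "a = w" "b = w" using P_leaf[OF t(6)] P_leaf[OF t(7)] by auto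
    then show False using abc(5) by simp
  qed
  have az: "a \<noteq> z"
  proof
    assume "a = z"
    then have "w = r'" using P_into_z[OF t(6)[unfolded \<open>a = z\<close>]] wX by auto
    then show False using wr' by simp
  qed
  have bz: "b \<noteq> z"
  proof
    assume "b = z"
    then have "w = r'" using P_into_z[OF t(7)[unfolded \<open>b = z\<close>]] wX by auto
    then show False using wr' by simp
  qed
  have aX: "a \<in> X" "b \<in> X" using abc(2,3) az bz by auto
  show "t \<in> triplets V A \<union> newT X z"
  proof (cases "c = z")
    case True
    then have "t \<in> newT X z" unfolding newT_def using abc(1,5) aX by blast
    then show ?thesis by blast
  next
    case cz: False
    then have cX: "c \<in> X" using abc(4) by auto
    have pne: "p1 \<noteq> p3" "p1 \<noteq> p4" "p3 \<noteq> p4" using lp abc(5-7) by auto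
    show ?thesis
    proof (cases "v = r'")
      case vr: True
      obtain q1 where q1: "p1 = r' # q1" using t(4) vr by (cases p1) (auto simp: dpath_def)
      have cr': "c \<noteq> r'" using cX XV fr by auto
      then have q1p: "q1 \<noteq> []" "(r', hd q1) \<in> A'" "dpath A' q1 (hd q1) c"
        using t(4) vr q1 by (auto simp: dpath_Cons split: if_splits)
      have "hd q1 \<noteq> z"
      proof
        assume "hd q1 = z" then have "c = z" using P_leaf[OF q1p(3)] by simp
        then show False using cz by simp
      qed
      then have hq1: "hd q1 = r" using q1p(2) fr rne AV by auto
      have q1A: "dpath A q1 r c" using P_restrict[OF q1p(3)[unfolded hq1]] rne by simp
      have rc: "r \<noteq> c" using cX rX by auto
      have lq1: "last q1 = c" using q1A by (simp add: dpath_def)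
      have rint1: "r \<in> interior p1" unfolding q1 interior_Cons using hd_butlast[OF q1p(1)] hq1 lq1 rc by simp
      show ?thesis
      proof (cases "w = r")
        case False
        obtain q2 where q2: "p2 = r' # q2" using t(5) vr by (cases p2) (auto simp: dpath_def)
        then have q2p: "q2 \<noteq> []" "(r', hd q2) \<in> A'" "dpath A' q2 (hd q2) w"
          using t(5) vr wr' by (auto simp: dpath_Cons split: if_splits)
        have "hd q2 \<noteq> z"
        proof
          assume "hd q2 = z" then have "w = z" using P_leaf[OF q2p(3)] by simp
          then show False using wX by simp
        qed
        then have hq2: "hd q2 = r" using q2p(2) fr rne AV by auto
        have lq2: "last q2 = w" using q2p(3) by (simp add: dpath_def)
        have rint2: "r \<in> interior p2" unfolding q2 interior_Cons using hd_butlast[OF q2p(1)] hq2 lq2 False by simp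
        have "p1 \<noteq> p2" using lp cX wX by auto
        then have "interior p1 \<inter> interior p2 = {}" using t(8) by simp
        then show ?thesis using rint1 rint2 by blast
      next
        case wr: True
        have p3A: "dpath A p3 r a" using P_restrict[OF t(6)[unfolded wr]] rne by simp
        have p4A: "dpath A p4 r b" using P_restrict[OF t(7)[unfolded wr]] rne by simp
        have i13: "interior p1 \<inter> interior p3 = {}" "interior p1 \<inter> interior p4 = {}" "interior p3 \<inter> interior p4 = {}"
          using t(8) pne by auto
        have s1: "set (butlast (tl q1)) \<subseteq> interior p1" unfolding q1 interior_Cons by (rule butlast_tl_sub)
        have I: "set (butlast (tl q1)) \<inter> set (butlast (tl p3)) = {}"
          "set (butlast (tl q1)) \<inter> set (butlast (tl p4)) = {}"
          "set (butlast (tl p3)) \<inter> set (butlast (tl p4)) = {}"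
          using i13 s1 unfolding interior_def by blast+
        have ra: "c \<noteq> r" "a \<noteq> r" "b \<noteq> r" using cX aX rX by auto
        have c2: "card {w. (r,w) \<in> A} \<le> 2" using out_r by (simp add: outdeg_def)
        show ?thesis using three_paths[OF fin_out c2 q1A p3A p4A ra abc(6)[symmetric] abc(7)[symmetric] abc(5)
           _ _ _ I] leaf_noout cX aX by blast
      qed
    next
      case vr: False
      have vz: "v \<noteq> z"
      proof
        assume "v = z" then have "w = z" using P_leaf[OF t(5)] by simp
        then show False using t(3) \<open>v = z\<close> by simp
      qed
      have vV: "v \<in> V" "w \<in> V" using t(1,2) vr vz wr' wX by auto
      have "dpath A p1 v c" "dpath A p2 v w" using P_restrict t(4,5) vr by auto
      moreover have "dpath A p3 w a" "dpath A p4 w b" using P_restrict t(6,7) wr' by auto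
      ultimately have "triplet_consistent V A a b c" unfolding triplet_consistent_def using vV t(3,8) by blast
      then have "t \<in> triplets V A" unfolding triplets_def using abc(1,5-7) aX cX lvs by blast
      then show ?thesis by blast
    qed
  qed
qed

lemma T_eq: "triplets V' A' = triplets V A \<union> newT X z"
  using T_sub T_sup1 T_sup2 by blast

lemma fin_T: "finite (triplets V A)"
proof -
  have "triplets V A \<subseteq> (\<lambda>(a,b,c). ({a,b},c)) ` (X \<times> X \<times> X)"
  proof
    fix t assume "t \<in> triplets V A"
    then obtain a b c where abc: "t = ({a,b},c)" "a \<in> X" "b \<in> X" "c \<in> X"
      unfolding triplets_def lvs by blast
    show "t \<in> (\<lambda>(a,b,c). ({a,b},c)) ` (X \<times> X \<times> X)"
      by (rule image_eqI[where x="(a,b,c)"]) (auto simp: abc)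
  qed
  moreover have "finite X" using XV fin by (rule finite_subset)
  ultimately show ?thesis by (meson finite_SigmaI finite_imageI finite_subset)
qed

lemma fin_new: "finite (newT X z)"
proof -
  have "newT X z \<subseteq> (\<lambda>(a,b). ({a,b},z)) ` (X \<times> X)" unfolding newT_def by auto
  moreover have "finite X" using XV fin by (rule finite_subset)
  ultimately show ?thesis by (meson finite_SigmaI finite_imageI finite_subset)
qed

lemma card_T_new: "card (triplets V' A') = card (triplets V A) + card (newT X z)"
proof -
  have "triplets V A \<inter> newT X z = {}" unfolding triplets_def newT_def lvs using XV fr by auto
  then show ?thesis unfolding T_eq using fin_T fin_new by (simp add: card_Un_disjoint)
qed

end

lemma b1_bn: "binary_network (set [0..<11]) (set As1) (set [5,6,7,9,10])"
proof (rule bn_check[where rk=rk1 and r=0])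
  show "set As1 \<subseteq> set [0..<11] \<times> set [0..<11]" unfolding As1_def by code_simp
  show "\<forall>(u,v)\<in>set As1. rk1 u < rk1 v" unfolding As1_def rk1_def by code_simp
  show "\<forall>v\<in>set [0..<11]. indeg (set As1) v = 0 \<longleftrightarrow> v = 0" unfolding indeg_set As1_def by code_simp
  show "\<forall>v\<in>set [0..<11]. (indeg (set As1) v = 0 \<and> outdeg (set As1) v = 2) \<or>
             (indeg (set As1) v = 1 \<and> outdeg (set As1) v = 0) \<or>
             (indeg (set As1) v = 1 \<and> outdeg (set As1) v = 2) \<or>
             (indeg (set As1) v = 2 \<and> outdeg (set As1) v = 1)" unfolding indeg_set outdeg_set As1_def by code_simp
  show "Set.filter (\<lambda>v. indeg (set As1) v = 1 \<and> outdeg (set As1) v = 0) (set [0..<11]) = set [5,6,7,9,10]"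
    unfolding indeg_set outdeg_set As1_def by code_simp
qed simp_all

lemma b2_bn: "binary_network (set [0..<11]) (set As2) (set [5,6,7,9,10])"
proof (rule bn_check[where rk=id and r=0])
  show "set As2 \<subseteq> set [0..<11] \<times> set [0..<11]" unfolding As2_def by code_simp
  show "\<forall>(u,v)\<in>set As2. id u < id v" unfolding As2_def by code_simp
  show "\<forall>v\<in>set [0..<11]. indeg (set As2) v = 0 \<longleftrightarrow> v = 0" unfolding indeg_set As2_def by code_simp
  show "\<forall>v\<in>set [0..<11]. (indeg (set As2) v = 0 \<and> outdeg (set As2) v = 2) \<or>
             (indeg (set As2) v = 1 \<and> outdeg (set As2) v = 0) \<or>
             (indeg (set As2) v = 1 \<and> outdeg (set As2) v = 2) \<or>
             (indeg (set As2) v = 2 \<and> outdeg (set As2) v = 1)" unfolding indeg_set outdeg_set As2_def by code_simp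
  show "Set.filter (\<lambda>v. indeg (set As2) v = 1 \<and> outdeg (set As2) v = 0) (set [0..<11]) = set [5,6,7,9,10]"
    unfolding indeg_set outdeg_set As2_def by code_simp
qed simp_all

lemma b1_good: "good (set [0..<11]) (set As1) (set [5,6,7,9,10]) (0::nat)"
proof -
  have h: "card {v\<in>set [0..<11]. hybrid (set As1) v} \<le> 1"
    unfolding hybrid_def indeg_set outdeg_set As1_def by code_simp
  have n: "notri (set As1)"
  proof (rule notri_check[where V="set [0..<11]"])
    show "set As1 \<subseteq> set [0..<11] \<times> set [0..<11]" unfolding As1_def by code_simp
    show "\<forall>a\<in>set [0..<11]. \<forall>b\<in>set (nbrs As1 a). \<forall>c\<in>set (nbrs As1 a). b = c \<or> ((b,c) \<notin> set As1 \<and> (c,b) \<notin> set As1)"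
      unfolding As1_def nbrs_def by code_simp
  qed
  have rq: "reachQ (set As1) 0 (set [5,6,7,9,10])"
    by (rule reachQ_check[where k=11]) (unfold As1_def, code_simp)
  have pq: "pairQ (set As1) 0 (set [5,6,7,9,10])"
    by (rule pairQ_check[where k=11]) (unfold As1_def chkQ_def interior_def, code_simp)
  have rk: "\<forall>(u,v)\<in>set As1. rk1 u < rk1 v" unfolding As1_def rk1_def by code_simp
  have r0: "\<forall>u. (u, 0) \<notin> set As1" unfolding As1_def by simp
  show ?thesis unfolding good_def using b1_bn h n rq pq rk r0 by auto
qed

lemma b2_good: "good (set [0..<11]) (set As2) (set [5,6,7,9,10]) (0::nat)"
proof -
  have h: "card {v\<in>set [0..<11]. hybrid (set As2) v} \<le> 1"
    unfolding hybrid_def indeg_set outdeg_set As2_def by code_simp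
  have n: "notri (set As2)"
  proof (rule notri_check[where V="set [0..<11]"])
    show "set As2 \<subseteq> set [0..<11] \<times> set [0..<11]" unfolding As2_def by code_simp
    show "\<forall>a\<in>set [0..<11]. \<forall>b\<in>set (nbrs As2 a). \<forall>c\<in>set (nbrs As2 a). b = c \<or> ((b,c) \<notin> set As2 \<and> (c,b) \<notin> set As2)"
      unfolding As2_def nbrs_def by code_simp
  qed
  have rq: "reachQ (set As2) 0 (set [5,6,7,9,10])"
    by (rule reachQ_check[where k=11]) (unfold As2_def, code_simp)
  have pq: "pairQ (set As2) 0 (set [5,6,7,9,10])"
    by (rule pairQ_check[where k=11]) (unfold As2_def chkQ_def interior_def, code_simp)
  have rk: "\<forall>(u,v)\<in>set As2. id u < id v" unfolding As2_def by code_simp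
  have r0: "\<forall>u. (u, 0) \<notin> set As2" unfolding As2_def by simp
  show ?thesis unfolding good_def using b2_bn h n rq pq rk r0 by auto
qed


lemma base_card: assumes bn: "binary_network (set [0..<11]) (set As) (set [5,6,7,9,10::nat])"
  and Vs: "set Vs = fst ` set As"
  shows "card (triplets (set [0..<11]) (set As)) = card (Set.filter (\<lambda>(a,b,c). a < b \<and> a \<noteq> c \<and> b \<noteq> c \<and> chk 11 As Vs a b c)
     (set [5,6,7,9,10] \<times> set [5,6,7,9,10] \<times> set [5,6,7,9,10]))"
proof -
  have L: "leaves (set [0..<11]) (set As) = set [5,6,7,9,10]" using bn by (simp add: binary_network_def)
  have d: "set As \<subseteq> set [0..<11] \<times> set [0..<11]" "finite (set [0..<11::nat])" "\<forall>v. (v,v) \<notin> (set As)\<^sup>+"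
    using bn by (auto simp: binary_network_def is_dag_def)
  have tcc: "\<And>a b c. a < b \<Longrightarrow> triplet_consistent (set [0..<11]) (set As) a b c = chk 11 As Vs a b c"
    using tc_chk[OF d] Vs by simp
  have "card (triplets (set [0..<11]) (set As)) = card (Set.filter (\<lambda>(a,b,c). a < b \<and> a \<noteq> c \<and> b \<noteq> c \<and> triplet_consistent (set [0..<11]) (set As) a b c)
     (set [5,6,7,9,10] \<times> set [5,6,7,9,10] \<times> set [5,6,7,9,10]))"
    using triplets_card[of "set [0..<11]" "set As"] L by simp
  also have "\<dots> = card (Set.filter (\<lambda>(a,b,c). a < b \<and> a \<noteq> c \<and> b \<noteq> c \<and> chk 11 As Vs a b c)
     (set [5,6,7,9,10] \<times> set [5,6,7,9,10] \<times> set [5,6,7,9,10]))"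
  proof -
    have fe: "(\<lambda>(a,b,c). a < b \<and> a \<noteq> c \<and> b \<noteq> c \<and> triplet_consistent (set [0..<11]) (set As) a b c)
         = (\<lambda>(a,b,c). a < b \<and> a \<noteq> c \<and> b \<noteq> c \<and> chk 11 As Vs a b c)"
    proof (rule ext)
      fix x :: "nat \<times> nat \<times> nat"
      obtain a b c where x: "x = (a,b,c)" by (metis prod_cases3)
      have "(a < b \<and> a \<noteq> c \<and> b \<noteq> c \<and> triplet_consistent (set [0..<11]) (set As) a b c) =
            (a < b \<and> a \<noteq> c \<and> b \<noteq> c \<and> chk 11 As Vs a b c)" using tcc by blast
      then show "(\<lambda>(a,b,c). a < b \<and> a \<noteq> c \<and> b \<noteq> c \<and> triplet_consistent (set [0..<11]) (set As) a b c) x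
         = (\<lambda>(a,b,c). a < b \<and> a \<noteq> c \<and> b \<noteq> c \<and> chk 11 As Vs a b c) x" unfolding x by simp
    qed
    show ?thesis by (simp only: fe)
  qed
  finally show ?thesis .
qed

lemma b1_card: "card (triplets (set [0..<11]) (set As1)) = 15"
proof -
  have "card (triplets (set [0..<11]) (set As1)) = card (Set.filter (\<lambda>(a,b,c). a < b \<and> a \<noteq> c \<and> b \<noteq> c \<and> chk 11 As1 [0,2,3,4,1,8] a b c)
     (set [5,6,7,9,10] \<times> set [5,6,7,9,10] \<times> set [5,6,7,9,10]))"
    by (rule base_card[OF b1_bn]) (unfold As1_def, code_simp)
  also have "\<dots> = 15" unfolding As1_def chk_def disj4_def interior_def by code_simp
  finally show ?thesis .
qed

lemma b2_card: "card (triplets (set [0..<11]) (set As2)) = 16"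
proof -
  have "card (triplets (set [0..<11]) (set As2)) = card (Set.filter (\<lambda>(a,b,c). a < b \<and> a \<noteq> c \<and> b \<noteq> c \<and> chk 11 As2 [0,1,2,3,4,8] a b c)
     (set [5,6,7,9,10] \<times> set [5,6,7,9,10] \<times> set [5,6,7,9,10]))"
    by (rule base_card[OF b2_bn]) (unfold As2_def, code_simp)
  also have "\<dots> = 16" unfolding As2_def chk_def disj4_def interior_def by code_simp
  finally show ?thesis .
qed


definition flip :: "('v\<times>'v) set \<Rightarrow> 'v\<times>'v \<Rightarrow> 'v\<times>'v" where
  "flip F e = (if e \<in> F then prod.swap e else e)"

lemma flip_mem: "(x,y) \<in> flip F ` B \<Longrightarrow> (x,y) \<in> B \<or> (y,x) \<in> B"
proof -
  assume "(x,y) \<in> flip F ` B"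
  then obtain e where e: "e \<in> B" "flip F e = (x,y)" by (metis imageE)
  show ?thesis
  proof (cases "e \<in> F")
    case True then have "e = (y,x)" using e(2) by (auto simp: flip_def prod_eq_iff)
    then show ?thesis using e(1) by simp
  next
    case False then have "e = (x,y)" using e(2) by (simp add: flip_def)
    then show ?thesis using e(1) by simp
  qed
qed

lemma flip_mem2: "(x,y) \<in> B \<Longrightarrow> (x,y) \<in> flip F ` B \<or> (y,x) \<in> flip F ` B"
proof -
  assume xy: "(x,y) \<in> B"
  then have m: "flip F (x,y) \<in> flip F ` B" by blast
  show ?thesis
  proof (cases "(x,y) \<in> F")
    case True then have "flip F (x,y) = (y,x)" by (simp add: flip_def)
    then show ?thesis using m by simp
  next
    case False then have "flip F (x,y) = (x,y)" by (simp add: flip_def)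
    then show ?thesis using m by simp
  qed
qed

lemma adj_flip: "adj (flip F ` B) = adj B"
proof (intro ext iffI)
  fix x y assume "adj (flip F ` B) x y"
  then have "(x,y) \<in> flip F ` B \<or> (y,x) \<in> flip F ` B" unfolding adj_def .
  then show "adj B x y" unfolding adj_def using flip_mem[of x y F B] flip_mem[of y x F B] by blast
next
  fix x y assume "adj B x y"
  then have "(x,y) \<in> B \<or> (y,x) \<in> B" unfolding adj_def .
  then show "adj (flip F ` B) x y" unfolding adj_def using flip_mem2[of x y B F] flip_mem2[of y x B F] by blast
qed

lemma uconn_flip: "uconnected (flip F ` B) S = uconnected B S"
  unfolding uconnected_def uedges_def adj_flip ..

lemma bicomp_flip: "bicomp V (flip F ` A) = bicomp V A"
  unfolding bicomp_def[abs_def] biconnected_def uconn_flip ..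

lemma fst_snd_flip: "{fst (flip F e), snd (flip F e)} = {fst e, snd e}"
  by (auto simp: flip_def)

lemma edges_in_flip: "edges_in (flip F ` A) S = flip F ` edges_in A S"
proof
  show "edges_in (flip F ` A) S \<subseteq> flip F ` edges_in A S"
  proof
    fix e' assume "e' \<in> edges_in (flip F ` A) S"
    then obtain e where e: "e \<in> A" "e' = flip F e" "fst e' \<in> S" "snd e' \<in> S" unfolding edges_in_def by blast
    have "{fst e, snd e} = {fst e', snd e'}" using fst_snd_flip[of F e] e(2) by simp
    also have "\<dots> \<subseteq> S" using e(3,4) by simp
    finally have "fst e \<in> S" "snd e \<in> S" by auto
    then have "e \<in> edges_in A S" using e(1) unfolding edges_in_def by simp
    then show "e' \<in> flip F ` edges_in A S" using e(2) by blast
  qed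
next
  show "flip F ` edges_in A S \<subseteq> edges_in (flip F ` A) S"
  proof
    fix e' assume "e' \<in> flip F ` edges_in A S"
    then obtain e where e: "e \<in> A" "e' = flip F e" "fst e \<in> S" "snd e \<in> S" unfolding edges_in_def by blast
    have "{fst e', snd e'} = {fst e, snd e}" using fst_snd_flip[of F e] e(2) by simp
    also have "\<dots> \<subseteq> S" using e(3,4) by simp
    finally have "fst e' \<in> S" "snd e' \<in> S" by auto
    then show "e' \<in> edges_in (flip F ` A) S" using e(1,2) unfolding edges_in_def by simp
  qed
qed

lemma galls_flip: assumes "inj_on (flip F) A" shows "galls V (flip F ` A) = galls V A"
proof -
  have "card (edges_in (flip F ` A) S) = card (edges_in A S)" for S
  proof -
    have "inj_on (flip F) (edges_in A S)" using assms by (rule inj_on_subset) (auto simp: edges_in_def)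
    then show ?thesis unfolding edges_in_flip by (rule card_image)
  qed
  then show ?thesis unfolding galls_def bicomp_flip by simp
qed

lemma cut_flip: assumes "inj_on (flip F) A" "e \<in> A"
  shows "cut_arc V (flip F ` A) (flip F e) \<longleftrightarrow> cut_arc V A e"
proof -
  have "flip F ` A - {flip F e} = flip F ` (A - {e})"
    using assms by (simp add: inj_on_image_set_diff)
  then show ?thesis unfolding cut_arc_def using assms(2) by (simp add: uconn_flip)
qed

lemma ntc_flip: assumes inj: "inj_on (flip F) A" and L1: "leaves V A = L" and L2: "leaves V (flip F ` A) = L"
  and FL: "\<forall>e\<in>A. e \<in> F \<longrightarrow> fst e \<notin> L \<and> snd e \<notin> L"
  shows "card (nontrivial_cut_arcs V (flip F ` A)) = card (nontrivial_cut_arcs V A)"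
proof -
  have sn: "snd (flip F e) \<notin> L \<longleftrightarrow> snd e \<notin> L" if "e \<in> A" for e
    using FL that by (auto simp: flip_def)
  have eq: "nontrivial_cut_arcs V (flip F ` A) = flip F ` nontrivial_cut_arcs V A"
  proof
    show "nontrivial_cut_arcs V (flip F ` A) \<subseteq> flip F ` nontrivial_cut_arcs V A"
    proof
      fix e' assume e': "e' \<in> nontrivial_cut_arcs V (flip F ` A)"
      then have "e' \<in> flip F ` A" unfolding nontrivial_cut_arcs_def cut_arc_def by simp
      then obtain e where e: "e \<in> A" "e' = flip F e" by blast
      have "cut_arc V A e" using e' e cut_flip[OF inj e(1)] unfolding nontrivial_cut_arcs_def by simp
      moreover have "snd e \<notin> L" using e' e sn[OF e(1)] L2 unfolding nontrivial_cut_arcs_def by simp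
      ultimately have "e \<in> nontrivial_cut_arcs V A" unfolding nontrivial_cut_arcs_def L1 by simp
      then show "e' \<in> flip F ` nontrivial_cut_arcs V A" using e(2) by blast
    qed
  next
    show "flip F ` nontrivial_cut_arcs V A \<subseteq> nontrivial_cut_arcs V (flip F ` A)"
    proof
      fix e' assume "e' \<in> flip F ` nontrivial_cut_arcs V A"
      then obtain e where e: "e \<in> nontrivial_cut_arcs V A" "e' = flip F e" by blast
      have eA: "e \<in> A" using e(1) unfolding nontrivial_cut_arcs_def cut_arc_def by simp
      have "cut_arc V (flip F ` A) e'" using e cut_flip[OF inj eA] unfolding nontrivial_cut_arcs_def by simp
      moreover have "snd e' \<notin> L" using e sn[OF eA] L1 unfolding nontrivial_cut_arcs_def by simp
      ultimately show "e' \<in> nontrivial_cut_arcs V (flip F ` A)" unfolding nontrivial_cut_arcs_def L2 by simp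
    qed
  qed
  have "inj_on (flip F) (nontrivial_cut_arcs V A)"
    using inj by (rule inj_on_subset) (auto simp: nontrivial_cut_arcs_def cut_arc_def)
  then show ?thesis unfolding eq by (rule card_image)
qed

lemma good_l1: assumes "good V A X r" shows "binary_level1 V A X"
proof -
  have bn: "binary_network V A X" and h: "card {v\<in>V. hybrid A v} \<le> 1" and nt: "notri A"
    using assms by (auto simp: good_def)
  have fin: "finite V" using bn by (simp add: binary_network_def is_dag_def)
  have "card {v \<in> S. hybrid A v} \<le> 1" if "bicomp V A S" for S
  proof -
    have "S \<subseteq> V" using that by (simp add: bicomp_def)
    then have "card {v \<in> S. hybrid A v} \<le> card {v\<in>V. hybrid A v}" using fin by (intro card_mono) auto
    then show ?thesis using h by simp
  qed
  then show ?thesis unfolding binary_level1_def using bn nt unfolding notri_def by blast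
qed

primrec rt :: "nat \<Rightarrow> nat" where "rt 0 = 0" | "rt (Suc k) = 11 + 2*k"
definition netV :: "nat \<Rightarrow> nat set" where "netV k = {0..<11+2*k}"
primrec netX :: "nat \<Rightarrow> nat set" where
  "netX 0 = {5,6,7,9,10}" | "netX (Suc k) = insert (12+2*k) (netX k)"
primrec netA :: "(nat\<times>nat) list \<Rightarrow> nat \<Rightarrow> (nat\<times>nat) set" where
  "netA As 0 = set As" | "netA As (Suc k) = insert (11+2*k, rt k) (insert (11+2*k, 12+2*k) (netA As k))"

lemma netV_0: "netV 0 = set [0..<11]" by (simp add: netV_def)
lemma netV_Suc: "netV (Suc k) = insert (11+2*k) (insert (12+2*k) (netV k))"
proof -
  have "{0..<11+2*Suc k} = insert (11+2*k) (insert (12+2*k) {0..<11+2*k})" by auto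
  then show ?thesis by (simp add: netV_def)
qed
lemma netX_0: "netX 0 = set [5,6,7,9,10]" by simp

lemma netV_eq: "netV k = {0..<11+2*k}" by (simp add: netV_def)

lemma fam_good: assumes "good (set [0..<11]) (set As) (set [5,6,7,9,10]) 0"
  shows "good (netV k) (netA As k) (netX k) (rt k)"
proof (induction k)
  case 0 then show ?case using assms by (simp only: netV_0 netX_0 netA.simps rt.simps)
next
  case (Suc k)
  have fr: "11 + 2*k \<notin> netV k" "12 + 2*k \<notin> netV k" "11 + 2*k \<noteq> 12 + 2*k" by (auto simp: netV_eq)
  have "good (insert (11+2*k) (insert (12+2*k) (netV k))) (insert (11+2*k, rt k) (insert (11+2*k, 12+2*k) (netA As k)))
     (insert (12+2*k) (netX k)) (11+2*k)" by (rule good_new[OF Suc fr])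
  then show ?case by (simp only: netV_Suc netX.simps netA.simps rt.simps)
qed

lemma fam_card: assumes "good (set [0..<11]) (set As) (set [5,6,7,9,10]) 0"
  shows "card (triplets (netV (Suc k)) (netA As (Suc k))) = card (triplets (netV k) (netA As k)) + card (newT (netX k) (12+2*k))"
proof -
  have fr: "11 + 2*k \<notin> netV k" "12 + 2*k \<notin> netV k" "11 + 2*k \<noteq> 12 + 2*k" by (auto simp: netV_eq)
  show ?thesis using card_T_new[OF fam_good[OF assms] fr] by (simp only: netV_Suc netX.simps netA.simps rt.simps)
qed

lemma fam_T: "card (triplets (netV k) (netA As1 k)) + 1 = card (triplets (netV k) (netA As2 k))"
proof (induction k)
  case 0 then show ?case using b1_card b2_card by (simp only: netV_0 netA.simps)
next
  case (Suc k) then show ?case using fam_card[OF b1_good, of k] fam_card[OF b2_good, of k] by simp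
qed

lemma netX_sub: "netX k \<subseteq> {5,6,7,9,10} \<union> {x. 12 \<le> x}"
  by (induction k) auto

lemma netX_card: "card (netX k) = 5 + k"
proof (induction k)
  case 0 then show ?case by simp
next
  case (Suc k)
  have "leaves (netV k) (netA As1 k) = netX k" using fam_good[OF b1_good, of k] unfolding good_def binary_network_def by blast
  moreover have "leaves (netV k) (netA As1 k) \<subseteq> netV k" unfolding leaves_def by blast
  ultimately have "netX k \<subseteq> netV k" by simp
  then have "12 + 2*k \<notin> netX k" by (auto simp: netV_eq)
  moreover have "finite (netX k)" using \<open>netX k \<subseteq> netV k\<close> by (rule finite_subset) (simp add: netV_eq)
  ultimately show ?case using Suc by simp
qed

lemma netA_sub: "netA As k \<subseteq> set As \<union> {e. 11 \<le> fst e}"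
  by (induction k) auto

lemma netA_base: "set As \<subseteq> netA As k"
  by (induction k) auto

definition FF :: "(nat\<times>nat) set" where "FF = {(2,1),(3,2),(4,3)}"

lemma flip_base: "flip FF ` set As1 = set As2"
  unfolding FF_def flip_def As1_def As2_def by code_simp

lemma flip_fam: "netA As2 k = flip FF ` netA As1 k"
proof (induction k)
  case 0 then show ?case using flip_base by simp
next
  case (Suc k)
  have "flip FF (11+2*k, rt k) = (11+2*k, rt k)" "flip FF (11+2*k, 12+2*k) = (11+2*k, 12+2*k)"
    by (auto simp: flip_def FF_def)
  then show ?case using Suc by simp
qed

lemma inj_fam: "inj_on (flip FF) (netA As1 k)"
proof (rule inj_onI)
  fix e1 e2 assume e: "e1 \<in> netA As1 k" "e2 \<in> netA As1 k" "flip FF e1 = flip FF e2"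
  have s: "e1 \<in> set As1 \<union> {e. 11 \<le> fst e}" "e2 \<in> set As1 \<union> {e. 11 \<le> fst e}" using e(1,2) netA_sub by blast+
  show "e1 = e2"
  proof (cases "e1 \<in> FF")
    case T1: True
    show ?thesis
    proof (cases "e2 \<in> FF")
      case True then show ?thesis using T1 e(3) by (simp add: flip_def prod_eq_iff)
    next
      case False
      then have "e2 = prod.swap e1" using T1 e(3) by (simp add: flip_def)
      then show ?thesis using T1 s(2) unfolding FF_def As1_def by auto
    qed
  next
    case F1: False
    show ?thesis
    proof (cases "e2 \<in> FF")
      case True
      then have "e1 = prod.swap e2" using F1 e(3) by (simp add: flip_def)
      then show ?thesis using True s(1) unfolding FF_def As1_def by auto
    next
      case False then show ?thesis using F1 e(3) by (simp add: flip_def)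
    qed
  qed
qed

theorem mainTheorem5:
  fixes n :: nat
  assumes "n \<ge> 6"
  shows "\<exists>(X :: nat set) V1 A1 V2 A2.
           card X = n \<and>
           binary_level1 V1 A1 X \<and> binary_level1 V2 A2 X \<and>
           (V1, A1) \<noteq> (V2, A2) \<and>
           card (galls V1 A1) = card (galls V2 A2) \<and>
           card (nontrivial_cut_arcs V1 A1) = card (nontrivial_cut_arcs V2 A2) \<and>
           card (triplets V1 A1) \<noteq> card (triplets V2 A2)"
proof -
  define k where "k = n - 5"
  have g1: "good (netV k) (netA As1 k) (netX k) (rt k)" by (rule fam_good[OF b1_good])
  have g2: "good (netV k) (netA As2 k) (netX k) (rt k)" by (rule fam_good[OF b2_good])
  have cX: "card (netX k) = n" using netX_card[of k] assms unfolding k_def by simp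
  have ne: "(netV k, netA As1 k) \<noteq> (netV k, netA As2 k)"
  proof -
    have "(2,1) \<in> set As1" unfolding As1_def by simp
    then have "(2,1) \<in> netA As1 k" using netA_base[of As1 k] by blast
    moreover have "(2,1) \<notin> set As2 \<union> {e. 11 \<le> fst e}" unfolding As2_def by simp
    then have "(2,1) \<notin> netA As2 k" using netA_sub[of As2 k] by blast
    ultimately show ?thesis by blast
  qed
  have fl: "netA As2 k = flip FF ` netA As1 k" by (rule flip_fam)
  have ga: "card (galls (netV k) (netA As1 k)) = card (galls (netV k) (netA As2 k))"
    unfolding fl galls_flip[OF inj_fam] ..
  have bn1: "binary_network (netV k) (netA As1 k) (netX k)" using g1 by (simp add: good_def)
  have bn2: "binary_network (netV k) (netA As2 k) (netX k)" using g2 by (simp add: good_def)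
  have L1: "leaves (netV k) (netA As1 k) = netX k" using bn1 by (simp add: binary_network_def)
  have L2': "leaves (netV k) (netA As2 k) = netX k" using bn2 by (simp add: binary_network_def)
  have L2: "leaves (netV k) (flip FF ` netA As1 k) = netX k" using L2' unfolding fl .
  have FL: "\<forall>e\<in>netA As1 k. e \<in> FF \<longrightarrow> fst e \<notin> netX k \<and> snd e \<notin> netX k"
  proof (intro ballI impI)
    fix e assume "e \<in> FF"
    then have "fst e \<in> {2,3,4}" "snd e \<in> {1,2,3}" unfolding FF_def by auto
    moreover have "\<And>x. x \<in> netX k \<Longrightarrow> x \<in> {5,6,7,9,10} \<union> {x. 12 \<le> x}" using netX_sub by blast
    ultimately show "fst e \<notin> netX k \<and> snd e \<notin> netX k" by fastforce
  qed
  have ca: "card (nontrivial_cut_arcs (netV k) (netA As1 k)) = card (nontrivial_cut_arcs (netV k) (netA As2 k))"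
    unfolding fl using ntc_flip[OF inj_fam L1 L2 FL] by simp
  have tr: "card (triplets (netV k) (netA As1 k)) \<noteq> card (triplets (netV k) (netA As2 k))"
    using fam_T[of k] by simp
  show ?thesis
    apply (rule exI[of _ "netX k"], rule exI[of _ "netV k"], rule exI[of _ "netA As1 k"],
           rule exI[of _ "netV k"], rule exI[of _ "netA As2 k"])
    using cX good_l1[OF g1] good_l1[OF g2] ne ga ca tr by (intro conjI)
qed


end
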